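(* A hypersemigroup $(H,\circ)$ is both regular and intra-regular if and only if for every right ideal $X$, every left ideal $Y$ and every bi-ideal $B$ of $H$ we have $X\cap B\cap Y\subseteq B*X*Y$.
   Context: Let $H$ be a nonempty set and $\mathcal{P}^*(H)$ the set of all nonempty subsets of $H$. A hyperoperation on $H$ is a map $\circ: H\times H\to \mathcal{P}^*(H)$; the pair $(H,\circ)$ is a hypergroupoid. For $A,B\in\mathcal{P}^*(H)$ define $A*B:=\bigcup_{(a,b)\in A\times B}(a\circ b)$. A hypergroupoid is a hypersemigroup if $\{x\}*(y\circ z)=(x\circ y)*\{z\}$ for all $x,y,z\in H$; then $*$ is associative on $\mathcal{P}^*(H)$. A hypersemigroup is regular if for every $a\in H$ there exists $x\in H$ with $a\in(a\circ x)*\{a\}$, and intra-regular if for every $a\in H$ there exist $x,y\in H$ with $a\in\{x\}*\{a\}*\{a\}*\{y\}$. A nonempty subset $A$ of $H$ is a left ideal if $H*A\subseteq A$ and a right ideal if $A*H\subseteq A$. A nonempty subset $B$ of $H$ is a bi-ideal if $B*H*B\subseteq B$. *)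

theory Defs
  imports Main
begin

text \<open>A hyperoperation on the whole type 'a (H = UNIV): values are nonempty subsets.\<close>

definition hypergroupoid :: "('a \<Rightarrow> 'a \<Rightarrow> 'a set) \<Rightarrow> bool" where
  "hypergroupoid ho \<longleftrightarrow> (\<forall>x y. ho x y \<noteq> {})"

definition setprod :: "('a \<Rightarrow> 'a \<Rightarrow> 'a set) \<Rightarrow> 'a set \<Rightarrow> 'a set \<Rightarrow> 'a set" where
  "setprod ho A B = (\<Union>(a, b) \<in> A \<times> B. ho a b)"

definition hypersemigroup :: "('a \<Rightarrow> 'a \<Rightarrow> 'a set) \<Rightarrow> bool" where
  "hypersemigroup ho \<longleftrightarrow> hypergroupoid ho \<and>
     (\<forall>x y z. setprod ho {x} (ho y z) = setprod ho (ho x y) {z})"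

definition regular_hs :: "('a \<Rightarrow> 'a \<Rightarrow> 'a set) \<Rightarrow> bool" where
  "regular_hs ho \<longleftrightarrow> (\<forall>a. \<exists>x. a \<in> setprod ho (ho a x) {a})"

definition intra_regular_hs :: "('a \<Rightarrow> 'a \<Rightarrow> 'a set) \<Rightarrow> bool" where
  "intra_regular_hs ho \<longleftrightarrow>
     (\<forall>a. \<exists>x y. a \<in> setprod ho (setprod ho (setprod ho {x} {a}) {a}) {y})"

definition left_ideal :: "('a \<Rightarrow> 'a \<Rightarrow> 'a set) \<Rightarrow> 'a set \<Rightarrow> bool" where
  "left_ideal ho A \<longleftrightarrow> A \<noteq> {} \<and> setprod ho UNIV A \<subseteq> A"

definition right_ideal :: "('a \<Rightarrow> 'a \<Rightarrow> 'a set) \<Rightarrow> 'a set \<Rightarrow> bool" where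
  "right_ideal ho A \<longleftrightarrow> A \<noteq> {} \<and> setprod ho A UNIV \<subseteq> A"

definition bi_ideal :: "('a \<Rightarrow> 'a \<Rightarrow> 'a set) \<Rightarrow> 'a set \<Rightarrow> bool" where
  "bi_ideal ho B \<longleftrightarrow> B \<noteq> {} \<and> setprod ho (setprod ho B UNIV) B \<subseteq> B"

end

theory Submission
  imports Defs
begin

lemma sp_mem: "t \<in> setprod ho A B \<longleftrightarrow> (\<exists>a\<in>A. \<exists>b\<in>B. t \<in> ho a b)"
  unfolding setprod_def by auto

lemma sp_mono: "A \<subseteq> A' \<Longrightarrow> B \<subseteq> B' \<Longrightarrow> setprod ho A B \<subseteq> setprod ho A' B'"
  unfolding setprod_def by blast

lemma sp_single: "setprod ho {a} {b} = ho a b"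
  unfolding setprod_def by auto

lemma sp_un1: "setprod ho (A \<union> B) C = setprod ho A C \<union> setprod ho B C"
  unfolding setprod_def by auto

lemma sp_un2: "setprod ho C (A \<union> B) = setprod ho C A \<union> setprod ho C B"
  unfolding setprod_def by auto

lemma sp_ax:
  assumes "hypersemigroup ho"
  shows "(\<exists>w\<in>ho y z. t \<in> ho x w) \<longleftrightarrow> (\<exists>w\<in>ho x y. t \<in> ho w z)"
proof -
  have "setprod ho {x} (ho y z) = setprod ho (ho x y) {z}"
    using assms unfolding hypersemigroup_def by blast
  then have "t \<in> setprod ho {x} (ho y z) \<longleftrightarrow> t \<in> setprod ho (ho x y) {z}" by simp
  then show ?thesis by (simp add: sp_mem)
qed

lemma sp_assoc:
  assumes "hypersemigroup ho"
  shows "setprod ho (setprod ho A B) C = setprod ho A (setprod ho B C)"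
proof (rule set_eqI)
  fix t
  show "t \<in> setprod ho (setprod ho A B) C \<longleftrightarrow> t \<in> setprod ho A (setprod ho B C)"
    unfolding sp_mem Bex_def sp_mem using sp_ax[OF assms] by blast
qed

theorem proposition25:
  fixes ho :: "'a \<Rightarrow> 'a \<Rightarrow> 'a set"
  assumes "hypersemigroup ho"
  shows "(regular_hs ho \<and> intra_regular_hs ho) \<longleftrightarrow>
    (\<forall>X Y B. right_ideal ho X \<longrightarrow> left_ideal ho Y \<longrightarrow> bi_ideal ho B \<longrightarrow>
       X \<inter> B \<inter> Y \<subseteq> setprod ho (setprod ho B X) Y)"
proof -
  note as = sp_assoc[OF assms]
  let ?P = "setprod ho"
  let ?U = "UNIV :: 'a set"
  have UU: "?P ?U ?U \<subseteq> ?U" by simp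
  show ?thesis
  proof
    assume "regular_hs ho \<and> intra_regular_hs ho"
    then have reg: "\<And>a. \<exists>x. a \<in> ?P (?P {a} {x}) {a}"
      and intra: "\<And>a. \<exists>y z. a \<in> ?P (?P (?P {y} {a}) {a}) {z}"
      unfolding regular_hs_def intra_regular_hs_def sp_single by auto
    show "\<forall>X Y B. right_ideal ho X \<longrightarrow> left_ideal ho Y \<longrightarrow> bi_ideal ho B \<longrightarrow>
       X \<inter> B \<inter> Y \<subseteq> ?P (?P B X) Y"
    proof (intro allI impI subsetI)
      fix X Y B a
      assume X: "right_ideal ho X" and Y: "left_ideal ho Y" and B: "bi_ideal ho B"
        and a: "a \<in> X \<inter> B \<inter> Y"
      obtain x where x: "a \<in> ?P (?P {a} {x}) {a}" using reg by blast
      obtain y z where yz: "a \<in> ?P (?P (?P {y} {a}) {a}) {z}" using intra by blast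
      let ?R = "?P {a} {x}"
      let ?I = "?P {y} (?P {a} (?P {a} {z}))"
      have s1: "{a} \<subseteq> ?P ?R {a}" using x by simp
      have s2: "?P ?R {a} \<subseteq> ?P ?R (?P ?R {a})" using sp_mono[OF order_refl s1] .
      have s3: "?P ?R (?P ?R {a}) = ?P {a} (?P {x} (?P {a} (?P {x} {a})))" by (simp add: as)
      have aI: "{a} \<subseteq> ?I" using yz by (simp add: as)
      have s4: "?P {a} (?P {x} (?P {a} (?P {x} {a}))) \<subseteq> ?P {a} (?P {x} (?P ?I (?P {x} {a})))"
        by (intro sp_mono order_refl aI)
      have s5: "?P {a} (?P {x} (?P ?I (?P {x} {a}))) =
         ?P (?P {a} (?P {x} (?P {y} {a}))) (?P (?P {a} (?P {z} {x})) {a})"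
        by (simp add: as)
      have b1: "?P {a} (?P {x} (?P {y} {a})) \<subseteq> B"
      proof -
        have "?P {a} (?P {x} (?P {y} {a})) = ?P (?P {a} (?P {x} {y})) {a}" by (simp add: as)
        also have "\<dots> \<subseteq> ?P (?P B ?U) B" using a by (intro sp_mono) auto
        also have "\<dots> \<subseteq> B" using B unfolding bi_ideal_def by blast
        finally show ?thesis .
      qed
      have x1: "?P {a} (?P {z} {x}) \<subseteq> X"
      proof -
        have "?P {a} (?P {z} {x}) \<subseteq> ?P X ?U" using a by (intro sp_mono) auto
        also have "\<dots> \<subseteq> X" using X unfolding right_ideal_def by blast
        finally show ?thesis .
      qed
      have "?P (?P {a} (?P {x} (?P {y} {a}))) (?P (?P {a} (?P {z} {x})) {a}) \<subseteq> ?P B (?P X Y)"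
        using a by (intro sp_mono b1 x1) auto
      then show "a \<in> ?P (?P B X) Y"
        using s1 s2 s3 s4 s5 by (simp add: as) blast
    qed
  next
    assume H: "\<forall>X Y B. right_ideal ho X \<longrightarrow> left_ideal ho Y \<longrightarrow> bi_ideal ho B \<longrightarrow>
       X \<inter> B \<inter> Y \<subseteq> ?P (?P B X) Y"
    have regset: "a \<in> ?P {a} (?P ?U {a})" for a
    proof -
      let ?B = "{a} \<union> ?P {a} (?P ?U {a})"
      let ?Y = "{a} \<union> ?P ?U {a}"
      have rX: "right_ideal ho ?U" unfolding right_ideal_def by simp
      have e1: "?P ?U ?Y = ?P ?U {a} \<union> ?P ?U (?P ?U {a})" by (rule sp_un2)
      have lY: "left_ideal ho ?Y" unfolding left_ideal_def
        using sp_mono[OF UU order_refl, where B="{a}" and ho=ho] e1 by (auto simp: as)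
      have e2: "?P ?B ?U = ?P {a} ?U \<union> ?P (?P {a} (?P ?U {a})) ?U" by (rule sp_un1)
      have BU: "?P ?B ?U \<subseteq> ?P {a} ?U"
        using sp_mono[OF order_refl subset_UNIV, where A="{a}" and B="?P (?P ?U {a}) ?U" and ho=ho]
        unfolding e2 by (auto simp: as)
      have UY: "?P ?U ?Y \<subseteq> ?P ?U {a}"
        using sp_mono[OF UU order_refl, where B="{a}" and ho=ho] unfolding e1 by (auto simp: as)
      have BUY: "?P (?P ?B ?U) ?Y \<subseteq> ?P {a} (?P ?U {a})"
      proof -
        have "?P (?P ?B ?U) ?Y \<subseteq> ?P (?P {a} ?U) ?Y" by (intro sp_mono BU order_refl)
        also have "\<dots> = ?P {a} (?P ?U ?Y)" by (simp add: as)
        also have "\<dots> \<subseteq> ?P {a} (?P ?U {a})" by (intro sp_mono UY order_refl)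
        finally show ?thesis .
      qed
      have bB: "bi_ideal ho ?B" unfolding bi_ideal_def
      proof
        show "?B \<noteq> {}" by simp
        have "?P (?P ?B ?U) ?B \<subseteq> ?P (?P {a} ?U) ?B" by (intro sp_mono BU order_refl)
        also have "\<dots> = ?P {a} (?P ?U ?B)" by (simp add: as)
        also have "\<dots> \<subseteq> ?P {a} (?P ?U ?Y)"
          using sp_mono[OF subset_UNIV order_refl, where A="?P {a} ?U" and B="{a}" and ho=ho]
          by (intro sp_mono order_refl) (auto simp: as[symmetric])
        also have "\<dots> \<subseteq> ?P {a} (?P ?U {a})" by (intro sp_mono UY order_refl)
        finally show "?P (?P ?B ?U) ?B \<subseteq> ?B" by blast
      qed
      have "a \<in> ?P (?P ?B ?U) ?Y" using H rX lY bB by blast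
      then show ?thesis using BUY by blast
    qed
    have reg: "regular_hs ho"
      unfolding regular_hs_def
    proof
      fix a
      from regset[of a] have "a \<in> ?P (?P {a} ?U) {a}" by (simp add: as)
      then obtain s t where "s \<in> ho a t" "a \<in> ho s a"
        by (auto simp: sp_mem)
      then have "a \<in> ?P (ho a t) {a}" unfolding sp_mem by auto
      then show "\<exists>x. a \<in> ?P (ho a x) {a}" by blast
    qed
    have intra: "intra_regular_hs ho"
      unfolding intra_regular_hs_def
    proof
      fix a
      let ?X = "?P {a} ?U" and ?Y = "?P ?U {a}" and ?B = "?P {a} (?P ?U {a})"
      have aX: "a \<in> ?X" using regset[of a] sp_mono[OF order_refl subset_UNIV, where A="{a}" and B="?P ?U {a}" and ho=ho] by blast
      have aY: "a \<in> ?Y" using regset[of a] sp_mono[OF subset_UNIV order_refl, where A="?P {a} ?U" and B="{a}" and ho=ho]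
        by (auto simp: as)
      have rX: "right_ideal ho ?X" unfolding right_ideal_def
        using sp_mono[OF order_refl UU, where A="{a}" and ho=ho] aX by (auto simp: as)
      have lY: "left_ideal ho ?Y" unfolding left_ideal_def
        using sp_mono[OF UU order_refl, where B="{a}" and ho=ho] aY by (auto simp: as)
      have bB: "bi_ideal ho ?B" unfolding bi_ideal_def
      proof
        show "?B \<noteq> {}" using regset[of a] by blast
        have "?P (?P ?B ?U) ?B = ?P {a} (?P (?P ?U (?P {a} (?P ?U (?P {a} ?U)))) {a})"
          by (simp add: as)
        also have "\<dots> \<subseteq> ?B" by (intro sp_mono order_refl subset_UNIV)
        finally show "?P (?P ?B ?U) ?B \<subseteq> ?B" .
      qed
      have "a \<in> ?P (?P ?B ?X) ?Y" using H rX lY bB aX aY regset[of a] by blast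
      also have "?P (?P ?B ?X) ?Y = ?P (?P {a} ?U) (?P (?P {a} {a}) (?P (?P ?U ?U) {a}))"
        by (simp add: as)
      also have "\<dots> \<subseteq> ?P ?U (?P (?P {a} {a}) ?U)" by (intro sp_mono order_refl subset_UNIV)
      finally have "a \<in> ?P ?U (?P (?P {a} {a}) ?U)" .
      then have "a \<in> ?P (?P (?P ?U {a}) {a}) ?U" by (simp add: as)
      then obtain p z where p: "p \<in> ?P (?P ?U {a}) {a}" and pz: "a \<in> ho p z"
        using sp_mem[of a ho "?P (?P ?U {a}) {a}" ?U] by blast
      from p obtain q where q: "q \<in> ?P ?U {a}" "p \<in> ho q a"
        using sp_mem[of p ho "?P ?U {a}" "{a}"] by blast
      from q(1) obtain y where y: "q \<in> ho y a"
        using sp_mem[of q ho ?U "{a}"] by blast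
      have "q \<in> ?P {y} {a}" using y by (simp add: sp_single)
      then have "p \<in> ?P (?P {y} {a}) {a}" using q(2) sp_mem[of p ho "?P {y} {a}" "{a}"] by blast
      then have "a \<in> ?P (?P (?P {y} {a}) {a}) {z}" using pz
        sp_mem[of a ho "?P (?P {y} {a}) {a}" "{z}"] by blast
      then show "\<exists>x y. a \<in> ?P (?P (?P {x} {a}) {a}) {y}" by blast
    qed
    show "regular_hs ho \<and> intra_regular_hs ho" using reg intra by blast
  qed
qed

end
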